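(* Let $T$ be an $n\times n$ complex matrix with distinct eigenvalues $\lambda_1,\dots,\lambda_n$. Let $u_1,\dots,u_n$ be unit eigenvectors of $T$ with $Tu_i=\lambda_iu_i$, let $v_1,\dots,v_n$ be unit eigenvectors of $T^*$ with $T^*v_i=\overline{\lambda_i}v_i$, and let $U=(u_1|u_2|\cdots|u_n)$ and $V=(v_1|v_2|\cdots|v_n)$ be the matrices with these vectors as columns. If $T$ is unitarily equivalent to a complex symmetric matrix, then $U^*U$ and $V^*V$ have the same eigenvalues, repeated according to multiplicity.
   Context: A complex symmetric matrix is a square complex matrix $S$ with $S=S^t$. Two matrices $A,B\in M_n(\mathbb{C})$ are unitarily equivalent if $A=W^*BW$ for some unitary $W$. *)

theory Defs
  imports "Jordan_Normal_Form.Schur_Decomposition"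
begin

definition unitary_mat :: "complex mat \<Rightarrow> bool" where
  "unitary_mat W \<longleftrightarrow> W \<in> carrier_mat (dim_row W) (dim_row W)
      \<and> mat_adjoint W * W = 1\<^sub>m (dim_row W)"

definition unitarily_equivalent :: "complex mat \<Rightarrow> complex mat \<Rightarrow> bool" where
  "unitarily_equivalent A B \<longleftrightarrow>
     (\<exists>W. unitary_mat W \<and> dim_row W = dim_row B \<and> A = mat_adjoint W * B * W)"

definition complex_symmetric :: "complex mat \<Rightarrow> bool" where
  "complex_symmetric S \<longleftrightarrow> S \<in> carrier_mat (dim_row S) (dim_row S) \<and> transpose_mat S = S"

end

theory Submission
  imports Defs
begin


lemma adj_eq: "mat_adjoint (A::complex mat) = mat (dim_col A) (dim_row A) (\<lambda>(i,j). cnj (A $$ (j,i)))"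
  unfolding mat_adjoint_def by (rule eq_matI, auto simp: mat_of_rows_def)

lemma adj_carrier[simp]: "A \<in> carrier_mat n m \<Longrightarrow> mat_adjoint (A::complex mat) \<in> carrier_mat m n"
  by (auto simp: adj_eq)

lemma adj_index[simp]: "i < dim_col A \<Longrightarrow> j < dim_row A \<Longrightarrow> mat_adjoint (A::complex mat) $$ (i,j) = cnj (A $$ (j,i))"
  by (simp add: adj_eq)

lemma adj_dims[simp]: "dim_row (mat_adjoint (A::complex mat)) = dim_col A" "dim_col (mat_adjoint A) = dim_row A"
  by (auto simp: adj_eq)

lemma adj_adj[simp]: "mat_adjoint (mat_adjoint (A::complex mat)) = A"
  by (rule eq_matI, auto)

lemma adj_mult: assumes "A \<in> carrier_mat n m" "B \<in> carrier_mat m k"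
  shows "mat_adjoint (A * (B::complex mat)) = mat_adjoint B * mat_adjoint A"
  using assms by (intro eq_matI, auto simp: scalar_prod_def sum_conjugate intro!: sum.cong)

lemma adj_sprod: assumes "A \<in> carrier_mat n m" "x \<in> carrier_vec m" "y \<in> carrier_vec n"
  shows "(A *\<^sub>v x) \<bullet>c y = x \<bullet>c (mat_adjoint (A::complex mat) *\<^sub>v y)"
  using assms apply (simp add: scalar_prod_def sum_distrib_left sum_distrib_right sum_conjugate)
  apply (subst sum.swap) apply (intro sum.cong refl) by (auto simp: ac_simps)



lemma eig_row: assumes T: "T \<in> carrier_mat n n" and e: "eigenvector T w l" and r: "r < n"
  shows "(\<Sum>c<n. T $$ (r,c) * w $ c) = l * w $ r"
proof -
  from e T have w: "w \<in> carrier_vec n" and eq: "T *\<^sub>v w = l \<cdot>\<^sub>v w" by (auto simp: eigenvector_def)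
  have "(T *\<^sub>v w) $ r = l * w $ r" using eq w r by auto
  thus ?thesis using T w r by (auto simp: scalar_prod_def row_def atLeast0LessThan)
qed

lemma eig_indep: fixes T :: "complex mat"
  assumes T: "T \<in> carrier_mat n n" and dist: "inj_on lam {..<n}"
    and eig: "\<And>i. i < n \<Longrightarrow> eigenvector T (u i) (lam i)"
  shows "finite K \<Longrightarrow> K \<subseteq> {..<n} \<Longrightarrow> (\<And>r. r < n \<Longrightarrow> (\<Sum>k\<in>K. x k * u k $ r) = 0) \<Longrightarrow> k \<in> K \<Longrightarrow> x k = 0"
proof (induction K arbitrary: x k rule: finite_induct)
  case empty then show ?case by simp
next
  case (insert a K)
  have aK: "a < n" "K \<subseteq> {..<n}" using insert(4) by auto
  have h: "x a * u a $ r + (\<Sum>k\<in>K. x k * u k $ r) = 0" if "r < n" for r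
    using insert(5)[OF that] insert(1,2) by simp
  have h2: "x a * lam a * u a $ r + (\<Sum>k\<in>K. x k * lam k * u k $ r) = 0" if r: "r < n" for r
  proof -
    have z: "(\<Sum>c<n. T $$ (r,c) * (x a * u a $ c + (\<Sum>k\<in>K. x k * u k $ c))) = 0"
      by (rule sum.neutral) (use h in auto)
    have e: "T $$ (r,c) * (x a * u a $ c + (\<Sum>k\<in>K. x k * u k $ c))
        = x a * (T $$ (r,c) * u a $ c) + (\<Sum>k\<in>K. x k * (T $$ (r,c) * u k $ c))" for c
      by (simp only: distrib_left sum_distrib_left mult.left_commute)
    have "(\<Sum>c<n. T $$ (r,c) * (x a * u a $ c + (\<Sum>k\<in>K. x k * u k $ c)))
       = x a * (\<Sum>c<n. T $$ (r,c) * u a $ c) + (\<Sum>k\<in>K. x k * (\<Sum>c<n. T $$ (r,c) * u k $ c))"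
      unfolding e sum.distrib sum_distrib_left by (subst sum.swap) (rule refl)
    also have "\<dots> = x a * (lam a * u a $ r) + (\<Sum>k\<in>K. x k * (lam k * u k $ r))"
      using eig_row[OF T eig r] aK by (intro arg_cong2[where f="(+)"] sum.cong refl) auto
    finally show ?thesis using z by (simp add: mult.assoc)
  qed
  have h3: "(\<Sum>k\<in>K. (x k * (lam k - lam a)) * u k $ r) = 0" if r: "r < n" for r
  proof -
    have "(\<Sum>k\<in>K. (x k * (lam k - lam a)) * u k $ r) = (\<Sum>k\<in>K. x k * lam k * u k $ r) - lam a * (\<Sum>k\<in>K. x k * u k $ r)"
      by (simp add: algebra_simps sum_subtractf sum_distrib_left)
    also have "\<dots> = 0"
    proof -
      have e1: "(\<Sum>k\<in>K. x k * u k $ r) = - (x a * u a $ r)" using h[OF r] by (simp add: eq_neg_iff_add_eq_0 add.commute)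
      have e2: "(\<Sum>k\<in>K. x k * lam k * u k $ r) = - (x a * lam a * u a $ r)" using h2[OF r] by (simp add: eq_neg_iff_add_eq_0 add.commute)
      show ?thesis unfolding e1 e2 by (simp add: algebra_simps)
    qed
    finally show ?thesis .
  qed
  have K0: "x k = 0" if k: "k \<in> K" for k
  proof -
    have "x k * (lam k - lam a) = 0" using insert(3)[OF aK(2) h3 k] .
    moreover have "lam k - lam a \<noteq> 0" using dist k aK insert(2) unfolding inj_on_def by auto
    ultimately show ?thesis using no_zero_divisors[of "x k" "lam k - lam a"] by blast
  qed
  have "x a * u a $ r = 0" if "r < n" for r using h[OF that] K0 by simp
  moreover have "\<exists>r<n. u a $ r \<noteq> 0"
  proof (rule ccontr)
    assume c: "\<not> ?thesis"
    from eig[OF aK(1)] T have ua: "u a \<in> carrier_vec n" "u a \<noteq> 0\<^sub>v n" by (auto simp: eigenvector_def)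
    have "u a = 0\<^sub>v n" by (rule eq_vecI) (use c ua in auto)
    with ua show False by simp
  qed
  ultimately have "x a = 0" by auto
  then show ?case using K0 insert(6) by auto
qed


lemma gram_index: fixes f :: "nat \<Rightarrow> complex vec" assumes f: "\<And>i. i < n \<Longrightarrow> f i \<in> carrier_vec n" and i: "i < n" and j: "j < n"
  shows "(mat_adjoint (mat_of_cols n (map f [0..<n])) * mat_of_cols n (map f [0..<n])) $$ (i,j) = f j \<bullet>c f i"
proof -
  define U where "U = mat_of_cols n (map f [0..<n])"
  have U: "U \<in> carrier_mat n n" unfolding U_def by (metis length_map diff_zero length_upt mat_of_cols_carrier(1))
  have Ui: "U $$ (k,l) = f l $ k" if "k < n" "l < n" for k l using that unfolding U_def mat_of_cols_def by simp
  have "(mat_adjoint U * U) $$ (i,j) = (\<Sum>k = 0..<n. cnj (U$$(k,i)) * U$$(k,j))"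
    using U i j by (simp add: scalar_prod_def)
  also have "\<dots> = f j \<bullet>c f i" using f[OF i] f[OF j] Ui i j by (simp add: scalar_prod_def ac_simps)
  finally show ?thesis unfolding U_def .
qed

lemma ifmult: "(if P then a else 0) * b = (if P then a * b else (0::'a::semiring_0))"
  "b * (if P then a else 0) = (if P then b * a else (0::'a::semiring_0))" by auto

lemma diag_left: assumes B: "B \<in> carrier_mat n n"
  shows "mat n n (\<lambda>(i,j). if i = j then e i else 0) * B = mat n n (\<lambda>(i,j). e i * B $$ (i,j))"
  using B by (intro eq_matI) (auto simp: scalar_prod_def ifmult sum.delta sum.delta')

lemma diag_right: assumes B: "B \<in> carrier_mat n n"
  shows "B * mat n n (\<lambda>(i,j). if i = j then e i else 0) = mat n n (\<lambda>(i,j). B $$ (i,j) * e j)"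
  using B by (intro eq_matI) (auto simp: scalar_prod_def ifmult sum.delta sum.delta')

lemma diag_sim: fixes B :: "complex mat"
  assumes B: "B \<in> carrier_mat n n" and de: "\<And>i. i < n \<Longrightarrow> d i * e i = 1"
    and A: "A = mat n n (\<lambda>(i,j). e i * B $$ (i,j) * d j)"
  shows "similar_mat A B"
proof -
  let ?P = "mat n n (\<lambda>(i,j). if i = j then e i else 0) :: complex mat"
  let ?Q = "mat n n (\<lambda>(i,j). if i = j then d i else 0) :: complex mat"
  have Pc: "?P \<in> carrier_mat n n" and Qc: "?Q \<in> carrier_mat n n" by auto
  have PQ: "?P * ?Q = 1\<^sub>m n" unfolding diag_left[OF Qc] by (rule eq_matI) (auto simp: de mult.commute)
  have QP: "?Q * ?P = 1\<^sub>m n" unfolding diag_left[OF Pc] by (rule eq_matI) (auto simp: de)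
  have "A = ?P * B * ?Q" unfolding diag_left[OF B] by (subst diag_right) (auto simp: A)
  thus ?thesis unfolding similar_mat_def similar_mat_wit_def Let_def using PQ QP B A
    by (intro exI[of _ ?P] exI[of _ ?Q]) auto
qed

theorem corollary1:
  fixes T :: "complex mat" and n :: nat
    and lam :: "nat \<Rightarrow> complex" and u v :: "nat \<Rightarrow> complex vec"
  assumes T: "T \<in> carrier_mat n n"
    and distinct: "inj_on lam {..<n}"
    and u_eig: "\<And>i. i < n \<Longrightarrow> eigenvector T (u i) (lam i)"
    and u_unit: "\<And>i. i < n \<Longrightarrow> u i \<bullet>c u i = 1"
    and v_eig: "\<And>i. i < n \<Longrightarrow> eigenvector (mat_adjoint T) (v i) (cnj (lam i))"
    and v_unit: "\<And>i. i < n \<Longrightarrow> v i \<bullet>c v i = 1"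
    and sym: "\<exists>S. complex_symmetric S \<and> unitarily_equivalent T S"
  shows "char_poly (mat_adjoint (mat_of_cols n (map u [0..<n])) * mat_of_cols n (map u [0..<n]))
       = char_poly (mat_adjoint (mat_of_cols n (map v [0..<n])) * mat_of_cols n (map v [0..<n]))"
proof -
  let ?U = "mat_of_cols n (map u [0..<n])"
  let ?V = "mat_of_cols n (map v [0..<n])"
  have Tad: "mat_adjoint T \<in> carrier_mat n n" using T by simp
  have uc: "u i \<in> carrier_vec n" "u i \<noteq> 0\<^sub>v n" "T *\<^sub>v u i = lam i \<cdot>\<^sub>v u i" if "i < n" for i
    using u_eig[OF that] T by (auto simp: eigenvector_def)
  have vc: "v i \<in> carrier_vec n" "v i \<noteq> 0\<^sub>v n" if "i < n" for i
    using v_eig[OF that] T by (auto simp: eigenvector_def)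
  have Uc: "?U \<in> carrier_mat n n" by (metis length_map diff_zero length_upt mat_of_cols_carrier(1))
  have Ui: "?U $$ (k,l) = u l $ k" if "k < n" "l < n" for k l using that unfolding mat_of_cols_def by simp
  have Uinj: "x = 0\<^sub>v n" if x: "x \<in> carrier_vec n" and ux: "?U *\<^sub>v x = 0\<^sub>v n" for x
  proof (rule eq_vecI)
    have "(\<Sum>k\<in>{..<n}. (x $ k) * u k $ r) = 0" if r: "r < n" for r
    proof -
      have "(?U *\<^sub>v x) $ r = 0" using ux r by simp
      moreover have "(?U *\<^sub>v x) $ r = (\<Sum>k = 0..<n. ?U $$ (r,k) * x $ k)"
        using Uc x r by (simp add: scalar_prod_def)
      ultimately show ?thesis using Ui r by (simp add: atLeast0LessThan ac_simps)
    qed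
    from eig_indep[OF T distinct u_eig _ _ this] show "i < dim_vec (0\<^sub>v n) \<Longrightarrow> x $ i = 0\<^sub>v n $ i" for i by auto
  qed (use x in auto)
  have detU: "det ?U \<noteq> 0" using det_0_iff_vec_prod_zero[OF Uc] Uinj by auto
  have Mc: "transpose_mat ?U \<in> carrier_mat n n" using Uc by simp
  have Minj: "y = 0\<^sub>v n" if y: "y \<in> carrier_vec n" and my: "transpose_mat ?U *\<^sub>v y = 0\<^sub>v n" for y
  proof (rule ccontr)
    assume "y \<noteq> 0\<^sub>v n"
    hence "det (transpose_mat ?U) = 0" using det_0_iff_vec_prod_zero[OF Mc] y my by auto
    thus False using detU det_transpose[OF Uc] by simp
  qed
  have Mv: "(transpose_mat ?U *\<^sub>v conjugate z) $ j = u j \<bullet>c z" if z: "z \<in> carrier_vec n" and j: "j < n" for z j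
    using Uc z j Ui by (simp add: scalar_prod_def)
  have orth: "u j \<bullet>c z = 0" if z: "eigenvector (mat_adjoint T) z (cnj (lam i))" and i: "i < n" and j: "j < n" and ij: "i \<noteq> j" for z i j
  proof -
    have zc: "z \<in> carrier_vec n" and Tz: "mat_adjoint T *\<^sub>v z = cnj (lam i) \<cdot>\<^sub>v z"
      using z T by (auto simp: eigenvector_def)
    have "(T *\<^sub>v u j) \<bullet>c z = u j \<bullet>c (mat_adjoint T *\<^sub>v z)" by (rule adj_sprod[OF T uc(1)[OF j] zc])
    hence "lam j * (u j \<bullet>c z) = lam i * (u j \<bullet>c z)"
      using uc[OF j] zc by (simp add: Tz conjugate_smult_vec)
    hence "(lam j - lam i) * (u j \<bullet>c z) = 0" by (simp add: algebra_simps)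
    moreover have "lam j - lam i \<noteq> 0" using distinct i j ij unfolding inj_on_def by auto
    ultimately show ?thesis using no_zero_divisors by blast
  qed
  obtain S W where S: "complex_symmetric S" and W: "unitary_mat W" and dW: "dim_row W = dim_row S"
    and TW: "T = mat_adjoint W * S * W"
    using sym unfolding unitarily_equivalent_def by blast
  have Wsq: "W \<in> carrier_mat (dim_row W) (dim_row W)" using W unfolding unitary_mat_def by auto
  have e1: "dim_row T = dim_col W" unfolding TW by simp
  have c1: "dim_col W = dim_row W" using Wsq by (rule carrier_matD(2))
  have c2: "dim_row T = n" using T by (rule carrier_matD(1))
  have dimW: "dim_row W = n" using c1 c2 e1 by linarith
  have Wc: "W \<in> carrier_mat n n" using Wsq unfolding dimW .
  have dS: "dim_row S = n" using dW dimW by linarith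
  have Sc: "S \<in> carrier_mat n n" using S unfolding complex_symmetric_def dS by (rule conjunct1)
  have Wa: "mat_adjoint W \<in> carrier_mat n n" using Wc by simp
  have Sa: "mat_adjoint S \<in> carrier_mat n n" using Sc by simp
  have WW1: "mat_adjoint W * W = 1\<^sub>m n" using W dimW unfolding unitary_mat_def by auto
  have WW2: "W * mat_adjoint W = 1\<^sub>m n" by (rule mat_mult_left_right_inverse[OF Wa Wc WW1])
  have WWv: "W *\<^sub>v (mat_adjoint W *\<^sub>v x) = x" if x: "x \<in> carrier_vec n" for x
    using assoc_mult_mat_vec[OF Wc Wa x, symmetric] x unfolding WW2 by simp
  have WWv': "mat_adjoint W *\<^sub>v (W *\<^sub>v x) = x" if x: "x \<in> carrier_vec n" for x
    using assoc_mult_mat_vec[OF Wa Wc x, symmetric] x unfolding WW1 by simp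
  have Sadj: "mat_adjoint S *\<^sub>v conjugate y = conjugate (S *\<^sub>v y)" if "y \<in> carrier_vec n" for y
  proof -
    have St: "S $$ (k,l) = S $$ (l,k)" if "k < n" "l < n" for k l
    proof -
      have "S $$ (k,l) = transpose_mat S $$ (k,l)" using S by (simp add: complex_symmetric_def)
      also have "\<dots> = S $$ (l,k)" using that Sc by simp
      finally show ?thesis .
    qed
    show ?thesis using that Sc St by (intro eq_vecI) (auto simp: scalar_prod_def sum_conjugate intro!: sum.cong)
  qed
  have WT: "W * T = S * W"
  proof -
    have SW: "S * W \<in> carrier_mat n n" using Sc Wc by simp
    have "W * T = W * (mat_adjoint W * (S * W))" unfolding TW assoc_mult_mat[OF Wa Sc Wc] ..
    also have "\<dots> = (W * mat_adjoint W) * (S * W)" by (rule assoc_mult_mat[OF Wc Wa SW, symmetric])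
    also have "\<dots> = S * W" unfolding WW2 by (rule left_mult_one_mat[OF SW])
    finally show ?thesis .
  qed
  have Tadj: "mat_adjoint T = mat_adjoint W * mat_adjoint S * W"
  proof -
    have WS: "mat_adjoint W * S \<in> carrier_mat n n" using Wa Sc by simp
    have "mat_adjoint T = mat_adjoint W * mat_adjoint (mat_adjoint W * S)"
      unfolding TW by (rule adj_mult[OF WS Wc])
    also have "mat_adjoint (mat_adjoint W * S) = mat_adjoint S * W"
      using adj_mult[OF Wa Sc] by simp
    also have "mat_adjoint W * (mat_adjoint S * W) = mat_adjoint W * mat_adjoint S * W"
      by (rule assoc_mult_mat[OF Wa Sa Wc, symmetric])
    finally show ?thesis .
  qed
  define y where "y i = W *\<^sub>v u i" for i
  define w where "w i = mat_adjoint W *\<^sub>v conjugate (y i)" for i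
  have yc: "y i \<in> carrier_vec n" "w i \<in> carrier_vec n" if "i < n" for i
  proof -
    show y: "y i \<in> carrier_vec n" unfolding y_def by (rule mult_mat_vec_carrier[OF Wc uc(1)[OF that]])
    show "w i \<in> carrier_vec n" unfolding w_def by (rule mult_mat_vec_carrier[OF Wa carrier_vec_conjugate[OF y]])
  qed
  have Sy: "S *\<^sub>v y i = lam i \<cdot>\<^sub>v y i" if i: "i < n" for i
  proof -
    have "S *\<^sub>v y i = (S * W) *\<^sub>v u i" unfolding y_def using Sc Wc uc[OF i] by simp
    also have "\<dots> = (W * T) *\<^sub>v u i" by (simp add: WT)
    also have "\<dots> = W *\<^sub>v (lam i \<cdot>\<^sub>v u i)" using Wc T uc[OF i] by simp
    also have "\<dots> = lam i \<cdot>\<^sub>v y i" unfolding y_def using Wc uc[OF i] by (simp add: mult_mat_vec)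
    finally show ?thesis .
  qed
  have Tw: "mat_adjoint T *\<^sub>v w i = cnj (lam i) \<cdot>\<^sub>v w i" if i: "i < n" for i
  proof -
    have cyc: "conjugate (y i) \<in> carrier_vec n" using yc[OF i] by simp
    have WWc: "W *\<^sub>v (mat_adjoint W *\<^sub>v conjugate (y i)) = conjugate (y i)"
      using assoc_mult_mat_vec[OF Wc Wa cyc, symmetric] cyc unfolding WW2 by simp
    have "mat_adjoint T *\<^sub>v w i = (mat_adjoint W * mat_adjoint S * W) *\<^sub>v (mat_adjoint W *\<^sub>v conjugate (y i))"
      unfolding Tadj w_def ..
    also have "\<dots> = mat_adjoint W *\<^sub>v (mat_adjoint S *\<^sub>v (W *\<^sub>v (mat_adjoint W *\<^sub>v conjugate (y i))))"
      by (simp only: assoc_mult_mat_vec[OF mult_carrier_mat[OF Wa Sa] Wc mult_mat_vec_carrier[OF Wa cyc]]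
          assoc_mult_mat_vec[OF Wa Sa mult_mat_vec_carrier[OF Wc mult_mat_vec_carrier[OF Wa cyc]]])
    also have "\<dots> = mat_adjoint W *\<^sub>v conjugate (S *\<^sub>v y i)" unfolding WWc Sadj[OF yc(1)[OF i]] ..
    also have "\<dots> = cnj (lam i) \<cdot>\<^sub>v w i" unfolding Sy[OF i] w_def using Wa yc[OF i]
      by (simp add: conjugate_smult_vec mult_mat_vec)
    finally show ?thesis .
  qed
  have ww: "w j \<bullet>c w i = u i \<bullet>c u j" if i: "i < n" and j: "j < n" for i j
  proof -
    have "w j \<bullet>c w i = conjugate (y j) \<bullet>c (W *\<^sub>v (mat_adjoint W *\<^sub>v conjugate (y i)))"
      unfolding w_def using adj_sprod[OF Wa, of "conjugate (y j)" "w i"] yc[OF i] yc[OF j] by (simp add: w_def)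
    also have "\<dots> = conjugate (y j) \<bullet>c conjugate (y i)"
      using yc[OF i] by (simp add: WWv)
    also have "\<dots> = y i \<bullet>c y j" using yc[OF i] yc[OF j] by (simp add: comm_scalar_prod[of _ n])
    also have "\<dots> = u i \<bullet>c (mat_adjoint W *\<^sub>v (W *\<^sub>v u j))"
      unfolding y_def by (rule adj_sprod[OF Wc uc(1)[OF i]]) (use Wc uc[OF j] in simp)
    also have "\<dots> = u i \<bullet>c u j" using uc(1)[OF j] by (simp add: WWv')
    finally show ?thesis .
  qed
  have wne: "w i \<noteq> 0\<^sub>v n" if i: "i < n" for i
  proof
    assume "w i = 0\<^sub>v n"
    hence "w i \<bullet>c w i = 0" by simp
    moreover have "w i \<bullet>c w i = 1" using ww[OF i i] u_unit[OF i] by simp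
    ultimately show False by simp
  qed
  have weig: "eigenvector (mat_adjoint T) (w i) (cnj (lam i))" if i: "i < n" for i
    unfolding eigenvector_def using yc[OF i] wne[OF i] Tw[OF i] Tad by auto
  let ?M = "transpose_mat ?U"
  define c where "c i = cnj ((u i \<bullet>c v i) / (u i \<bullet>c w i))" for i
  have vw: "v i = c i \<cdot>\<^sub>v w i" if i: "i < n" for i
  proof -
    have wc: "w i \<in> carrier_vec n" using yc[OF i] by simp
    have cwc: "conjugate (w i) \<in> carrier_vec n" using wc by simp
    have cvc: "conjugate (v i) \<in> carrier_vec n" using vc[OF i] by simp
    have bi: "u i \<bullet>c w i \<noteq> 0"
    proof
      assume b0: "u i \<bullet>c w i = 0"
      have "?M *\<^sub>v conjugate (w i) = 0\<^sub>v n"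
      proof (rule eq_vecI)
        fix j assume "j < dim_vec (0\<^sub>v n :: complex vec)"
        hence j: "j < n" by simp
        show "(?M *\<^sub>v conjugate (w i)) $ j = 0\<^sub>v n $ j"
          using Mv[OF wc j] orth[OF weig[OF i] i j] b0 j by (cases "i = j") auto
      qed (use Mc in simp)
      hence "conjugate (w i) = 0\<^sub>v n" using Minj[OF cwc] by simp
      hence "w i = 0\<^sub>v n" by (metis conjugate_zero_vec conjugate_id)
      thus False using wne[OF i] by simp
    qed
    define k where "k = (u i \<bullet>c v i) / (u i \<bullet>c w i)"
    let ?y = "conjugate (v i) - k \<cdot>\<^sub>v conjugate (w i)"
    have yc2: "?y \<in> carrier_vec n" using cvc cwc by simp
    have "?M *\<^sub>v ?y = 0\<^sub>v n"
    proof (rule eq_vecI)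
      fix j assume "j < dim_vec (0\<^sub>v n :: complex vec)"
      hence j: "j < n" by simp
      have "(?M *\<^sub>v ?y) $ j = (?M *\<^sub>v conjugate (v i)) $ j - k * (?M *\<^sub>v conjugate (w i)) $ j"
        using Mc cvc cwc j by (simp add: mult_minus_distrib_mat_vec[OF Mc] mult_mat_vec[OF Mc])
      also have "\<dots> = (u j \<bullet>c v i) - k * (u j \<bullet>c w i)" using Mv[OF vc(1)[OF i] j] Mv[OF wc j] by simp
      also have "\<dots> = 0"
      proof (cases "i = j")
        case True thus ?thesis using bi unfolding k_def by simp
      next
        case False thus ?thesis using orth[OF weig[OF i] i j] orth[OF v_eig[OF i] i j] by simp
      qed
      finally show "(?M *\<^sub>v ?y) $ j = 0\<^sub>v n $ j" using j by simp
    qed (use Mc in simp)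
    hence y0: "?y = 0\<^sub>v n" using Minj[OF yc2] by simp
    show ?thesis
    proof (rule eq_vecI)
      fix r assume "r < dim_vec (c i \<cdot>\<^sub>v w i)"
      hence r: "r < n" using wc by simp
      have "?y $ r = 0" using y0 r by simp
      hence "cnj (v i $ r) = k * cnj (w i $ r)" using r cvc cwc vc(1)[OF i] wc by simp
      hence "v i $ r = cnj k * w i $ r" by (metis complex_cnj_cnj complex_cnj_mult)
      thus "v i $ r = (c i \<cdot>\<^sub>v w i) $ r" using r wc unfolding c_def k_def by simp
    qed (use vc(1)[OF i] wc in simp)
  qed
  have cc: "c i * cnj (c i) = 1" if i: "i < n" for i
  proof -
    have wc: "w i \<in> carrier_vec n" using yc[OF i] by simp
    have "1 = v i \<bullet>c v i" using v_unit[OF i] by simp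
    also have "\<dots> = (c i \<cdot>\<^sub>v w i) \<bullet> (cnj (c i) \<cdot>\<^sub>v conjugate (w i))" unfolding vw[OF i] conjugate_smult_vec by simp
    also have "\<dots> = c i * cnj (c i) * (w i \<bullet>c w i)" using wc by simp
    also have "\<dots> = c i * cnj (c i)" using ww[OF i i] u_unit[OF i] by simp
    finally show ?thesis by simp
  qed
  let ?GU = "mat_adjoint ?U * ?U"
  let ?GV = "mat_adjoint ?V * ?V"
  have GUc: "?GU \<in> carrier_mat n n" by (rule mult_carrier_mat[OF adj_carrier[OF Uc] Uc])
  have Vc: "?V \<in> carrier_mat n n" by (metis length_map diff_zero length_upt mat_of_cols_carrier(1))
  have GVc: "?GV \<in> carrier_mat n n" by (rule mult_carrier_mat[OF adj_carrier[OF Vc] Vc])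
  have GV: "?GV = mat n n (\<lambda>(i,j). cnj (c i) * transpose_mat ?GU $$ (i,j) * c j)"
  proof (rule eq_matI)
    fix i j assume "i < dim_row (mat n n (\<lambda>(i,j). cnj (c i) * transpose_mat ?GU $$ (i,j) * c j))"
      "j < dim_col (mat n n (\<lambda>(i,j). cnj (c i) * transpose_mat ?GU $$ (i,j) * c j))"
    hence i: "i < n" and j: "j < n" by auto
    have wi: "w i \<in> carrier_vec n" and wj: "w j \<in> carrier_vec n" using yc[OF i] yc[OF j] by auto
    have "?GV $$ (i,j) = v j \<bullet>c v i" by (rule gram_index[OF vc(1) i j])
    also have "\<dots> = (c j \<cdot>\<^sub>v w j) \<bullet> (cnj (c i) \<cdot>\<^sub>v conjugate (w i))" unfolding vw[OF i] vw[OF j] conjugate_smult_vec by simp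
    also have "\<dots> = c j * cnj (c i) * (w j \<bullet>c w i)" using wi wj by simp
    also have "\<dots> = cnj (c i) * (u i \<bullet>c u j) * c j" using ww[OF i j] by simp
    also have "u i \<bullet>c u j = ?GU $$ (j,i)" by (rule gram_index[OF uc(1) j i, symmetric])
    also have "?GU $$ (j,i) = transpose_mat ?GU $$ (i,j)" using GUc i j by simp
    finally show "?GV $$ (i,j) = mat n n (\<lambda>(i,j). cnj (c i) * transpose_mat ?GU $$ (i,j) * c j) $$ (i,j)"
      using i j by simp
  qed (use GVc in auto)
  have "similar_mat ?GV (transpose_mat ?GU)"
    by (rule diag_sim[OF _ cc GV]) (use GUc in simp)
  hence "char_poly ?GV = char_poly (transpose_mat ?GU)" by (rule char_poly_similar)
  also have "\<dots> = char_poly ?GU" by (rule char_poly_transpose_mat[OF GUc])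
  finally show ?thesis by simp
qed

end
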